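(* Let $X$ and $Y$ be metric spaces with $X$ complete, and let $f\colon X\to Y$ be a continuous open surjection. Then $f$ is density-surjective, i.e. there exists a subset $Z\subset X$ such that $\mathrm{dens}(Z)=\mathrm{dens}(Y)$ and $f|_Z\colon Z\to Y$ is surjective.
   Context: For a metric space $W$, $\mathrm{dens}(W)$ (the density character) denotes the smallest cardinality of a dense subset of $W$. A map $f\colon X\to Y$ between metric spaces is called density-surjective if there is a subset $Z\subset X$ with $\mathrm{dens}(Z)=\mathrm{dens}(Y)$ such that $f|_Z\colon Z\to Y$ is surjective. A map is open if it maps open sets to open sets. *)

theory Defs
  imports "HOL-Analysis.Analysis"
begin

definition dense_subset :: "'a::metric_space set \<Rightarrow> 'a set \<Rightarrow> bool" where
  "dense_subset D W \<longleftrightarrow> D \<subseteq> W \<and> W \<subseteq> closure D"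

text \<open>Density character of W: the cardinal (card_of well-order) of a dense subset of W
  of minimal cardinality. Cardinals are compared up to ordIso.\<close>
definition dens :: "'a::metric_space set \<Rightarrow> 'a rel" where
  "dens W = (SOME r. \<exists>D. dense_subset D W \<and> r = card_of D \<and>
                         (\<forall>E. dense_subset E W \<longrightarrow> (card_of D, card_of E) \<in> ordLeq))"

end

theory Submission imports Defs begin
unbundle cardinal_syntax

lemma dens_spec:
  fixes W :: "'a::metric_space set"
  shows "\<exists>D. dense_subset D W \<and> dens W = (card_of D) \<and> (\<forall>E. dense_subset E W \<longrightarrow> (card_of D) \<le>o (card_of E))"
proof -
  have "\<exists>r \<in> {(card_of D) | D. dense_subset D W}. \<forall>r' \<in> {(card_of D) | D. dense_subset D W}. r \<le>o r'"
    by (rule exists_minim_Well_order) (auto simp: dense_subset_def card_of_Well_order, meson closure_subset order_refl)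
  then have ex: "\<exists>r. \<exists>D. dense_subset D W \<and> r = (card_of D) \<and> (\<forall>E. dense_subset E W \<longrightarrow> (card_of D) \<le>o (card_of E))"
    by blast
  show ?thesis using someI_ex[OF ex] unfolding dens_def by blast
qed

definition G :: "('a::metric_space \<Rightarrow> 'b::metric_space) \<Rightarrow> 'a set \<Rightarrow> real \<Rightarrow> 'b \<Rightarrow> nat \<Rightarrow> 'a" where
  "G f A \<rho> d j = (SOME t. t \<in> A \<and> f t = d \<and> ball d (1 / Suc j) \<subseteq> f ` ball t \<rho>)"

lemma key:
  fixes f :: "'a::metric_space \<Rightarrow> 'b::metric_space"
  assumes opn: "\<forall>U. open U \<longrightarrow> open (f ` U)"
    and dense: "UNIV \<subseteq> closure D"
    and "x' \<in> A" "open A" "f x' = y" "\<rho> > 0"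
  shows "\<exists>d\<in>D. \<exists>j. dist d y < \<rho> \<and> G f A \<rho> d j \<in> A \<and> f (G f A \<rho> d j) = d
           \<and> y \<in> f ` ball (G f A \<rho> d j) \<rho>"
proof -
  obtain e where e: "e > 0" "ball x' e \<subseteq> A" using assms open_contains_ball by blast
  define \<delta> where "\<delta> = min e (\<rho>/2)"
  have dpos: "\<delta> > 0" using e assms by (simp add: \<delta>_def)
  have bsub: "ball x' \<delta> \<subseteq> A" using e \<delta>_def by auto
  have "open (f ` ball x' \<delta>)" using opn by simp
  moreover have "y \<in> f ` ball x' \<delta>" using dpos assms by auto
  ultimately obtain \<eta> where eta: "\<eta> > 0" "ball y \<eta> \<subseteq> f ` ball x' \<delta>"
    using open_contains_ball by blast
  obtain j :: nat where j: "1 / Suc j < min (\<eta>/2) \<rho>"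
    using reals_Archimedean[of "min (\<eta>/2) \<rho>"] eta assms
    by (auto simp: inverse_eq_divide)
  have "y \<in> closure D" using dense by auto
  then obtain d where d: "d \<in> D" "dist d y < 1 / Suc j"
    using closure_approachable[of y D] by (metis of_nat_0_less_iff zero_less_Suc divide_pos_pos zero_less_one)
  have "y \<in> ball d (1/Suc j)" using d by (simp add: dist_commute)
  also have "ball d (1/Suc j) \<subseteq> ball y \<eta>"
  proof
    fix z assume "z \<in> ball d (1/Suc j)"
    then have "dist d z < 1/Suc j" by simp
    then have "dist y z < 2/Suc j" using d dist_triangle[of y z d]
      by (simp add: dist_commute)
    then show "z \<in> ball y \<eta>" using j by simp
  qed
  finally have yin: "y \<in> ball y \<eta>" .
  then obtain u where u: "u \<in> ball x' \<delta>" "f u = d"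
    using eta d
    by (smt (verit, ccfv_SIG) \<open>ball d (1 / real (Suc j)) \<subseteq> ball y \<eta>\<close> centre_in_ball dist_commute imageE mem_ball subsetD)
  have "ball x' \<delta> \<subseteq> ball u \<rho>"
  proof
    fix z assume "z \<in> ball x' \<delta>"
    then have "dist u z < 2*\<delta>" using u dist_triangle[of u z x'] by (simp add: dist_commute)
    then show "z \<in> ball u \<rho>" using \<delta>_def by simp
  qed
  then have "ball d (1 / Suc j) \<subseteq> f ` ball u \<rho>"
    using \<open>ball d (1/Suc j) \<subseteq> ball y \<eta>\<close> eta by blast
  then have ex: "\<exists>t. t \<in> A \<and> f t = d \<and> ball d (1 / Suc j) \<subseteq> f ` ball t \<rho>"
    using u bsub by blast
  define t where "t = G f A \<rho> d j"
  have t: "t \<in> A \<and> f t = d \<and> ball d (1 / Suc j) \<subseteq> f ` ball t \<rho>"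
    unfolding t_def G_def by (rule someI_ex[OF ex])
  have "y \<in> f ` ball t \<rho>" using t \<open>y \<in> ball d (1/Suc j)\<close> by blast
  moreover have "dist d y < \<rho>" using d j by simp
  ultimately show ?thesis using t d unfolding t_def by blast
qed

lemma arith1: "(A::real) \<le> B + C \<Longrightarrow> B \<le> Q - 2*P \<Longrightarrow> C < P \<Longrightarrow> R = P/2 \<Longrightarrow> A \<le> Q - 2*R"
  by linarith
lemma arith2: "(A::real) \<le> Q - 2*P \<Longrightarrow> 0 \<le> P \<Longrightarrow> A \<le> Q"
  by linarith
lemma arith3: "(A::real) \<le> B + C \<Longrightarrow> B \<le> 2*P \<Longrightarrow> C \<le> 2*P \<Longrightarrow> P < e/4 \<Longrightarrow> A < e"
  by linarith

lemma geom_cauchy: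
  fixes x :: "nat \<Rightarrow> 'a::metric_space"
  assumes "\<And>n. dist (x n) (x (Suc n)) < (1/2)^n"
  shows "Cauchy x"
proof -
  have b: "dist (x m) (x (m+k)) \<le> 2*(1/2)^m - 2*(1/2)^(m+k)" for m k
  proof (induction k)
    case 0 then show ?case by simp
  next
    case (Suc k)
    have t: "dist (x m) (x (m + Suc k)) \<le> dist (x m) (x (m+k)) + dist (x (m+k)) (x (Suc (m+k)))"
      using dist_triangle by simp
    have e: "(1/2::real)^(m + Suc k) = (1/2)^(m+k) / 2" by (simp add: power_add)
    have a: "dist (x (m+k)) (x (Suc (m+k))) < (1/2)^(m+k)" by (rule assms)
    show ?case by (rule arith1[OF t Suc.IH a e])
  qed
  have b2: "dist (x m) (x n) \<le> 2*(1/2)^m" if "m \<le> n" for m n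
  proof -
    define k where "k = n - m"
    have k: "n = m + k" using that by (simp add: k_def)
    have "(0::real) \<le> (1/2)^(m+k)" by simp
    from arith2[OF b[of m k] this] show ?thesis using k by simp
  qed
  show ?thesis
  proof (rule metric_CauchyI)
    fix e :: real assume "e > 0"
    then have "e/4 > 0" by simp
    then obtain M where M: "(1/2::real)^M < e/4" using real_arch_pow_inv[of "e/4" "1/2"] by auto
    show "\<exists>M. \<forall>m\<ge>M. \<forall>n\<ge>M. dist (x m) (x n) < e"
    proof (intro exI allI impI)
      fix m n assume "M \<le> m" "M \<le> n"
      show "dist (x m) (x n) < e"
        by (rule arith3[OF dist_triangle3 b2[OF \<open>M \<le> m\<close>] b2[OF \<open>M \<le> n\<close>] M])
    qed
  qed
qed

primrec Sl :: "('a::metric_space \<Rightarrow> 'b::metric_space) \<Rightarrow> 'b set \<Rightarrow> nat \<Rightarrow> 'a set" where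
  "Sl f D 0 = (\<Union>d\<in>D. \<Union>j. {G f UNIV 1 d j})"
| "Sl f D (Suc n) = (\<Union>s\<in>Sl f D n. \<Union>d\<in>D. \<Union>j. {G f (ball s ((1/2)^n)) ((1/2)^Suc n) d j})"

lemma Sl_card:
  fixes f :: "'a::metric_space \<Rightarrow> 'b::metric_space" and D :: "'b set"
  assumes "\<not> finite D"
  shows "card_of (Sl f D n) \<le>o card_of D"
proof -
  have nat: "card_of (UNIV::nat set) \<le>o card_of D" using assms infinite_iff_card_of_nat by blast
  have sing: "card_of {a} \<le>o card_of D" for a :: 'a
    by (rule card_of_singl_ordLeq) (use assms in auto)
  have gen: "card_of (\<Union>d\<in>D. \<Union>j. {g d j}) \<le>o card_of D" for g :: "'b \<Rightarrow> nat \<Rightarrow> 'a"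
    apply (rule card_of_UNION_ordLeq_infinite[OF assms card_of_refl[THEN ordIso_imp_ordLeq]])
    apply (intro ballI card_of_UNION_ordLeq_infinite[OF assms nat])
    using sing by blast
  show ?thesis
  proof (induction n)
    case 0 then show ?case using gen[of "G f UNIV 1"] by simp
  next
    case (Suc n)
    show ?case unfolding Sl.simps
      apply (rule card_of_UNION_ordLeq_infinite[OF assms Suc])
      using gen by blast
  qed
qed

lemma lift:
  fixes f :: "'a::complete_space \<Rightarrow> 'b::metric_space"
  assumes cont: "continuous_on UNIV f"
    and opn: "\<forall>U. open U \<longrightarrow> open (f ` U)"
    and surj: "surj f"
    and dense: "UNIV \<subseteq> closure D"
  shows "f ` closure (\<Union>n. Sl f D n) = UNIV"
proof -
  have "y \<in> f ` closure (\<Union>n. Sl f D n)" for y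
  proof -
    define P where "P n t \<longleftrightarrow> t \<in> Sl f D n \<and> y \<in> f ` ball t ((1/2)^n)" for n t
    define Q where "Q n t t' \<longleftrightarrow> dist t t' < (1/2::real)^n \<and> dist (f t') y < (1/2)^Suc n" for n t t'
    have "\<exists>t. P 0 t"
    proof -
      obtain x' where "f x' = y" using surj by (metis surjD)
      then obtain d j where "d \<in> D" "y \<in> f ` ball (G f UNIV 1 d j) 1"
        using key[OF opn dense, of x' UNIV y 1] by auto
      then show ?thesis unfolding P_def by auto
    qed
    moreover have "\<exists>t'. P (Suc n) t' \<and> Q n t t'" if "P n t" for n t
    proof -
      from that obtain x' where x': "x' \<in> ball t ((1/2)^n)" "f x' = y" "t \<in> Sl f D n"
        unfolding P_def by auto
      then obtain d j where dj: "d \<in> D" "dist d y < (1/2)^Suc n"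
        "G f (ball t ((1/2)^n)) ((1/2)^Suc n) d j \<in> ball t ((1/2)^n)"
        "f (G f (ball t ((1/2)^n)) ((1/2)^Suc n) d j) = d"
        "y \<in> f ` ball (G f (ball t ((1/2)^n)) ((1/2)^Suc n) d j) ((1/2)^Suc n)"
        using key[OF opn dense, of x' "ball t ((1/2)^n)" y "(1/2)^Suc n"] by auto
      define g where "g = G f (ball t ((1/2)^n)) ((1/2)^Suc n) d j"
      have "g \<in> Sl f D (Suc n)"
        using x'(3) dj(1) unfolding g_def Sl.simps by blast
      then have "P (Suc n) g \<and> Q n t g" using dj unfolding P_def Q_def g_def[symmetric]
        by (simp add: dist_commute)
      then show ?thesis by blast
    qed
    ultimately obtain x where x: "\<And>n. P n (x n) \<and> Q n (x n) (x (Suc n))"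
      using dependent_nat_choice[of P Q] by blast
    have "Cauchy x" using x unfolding Q_def by (intro geom_cauchy) auto
    then obtain l where l: "x \<longlonglongrightarrow> l" using Cauchy_convergent_iff convergent_def by blast
    have "(\<lambda>n. f (x n)) \<longlonglongrightarrow> f l"
      using cont l by (metis continuous_on_tendsto_compose UNIV_I eventually_sequentially)
    moreover have "(\<lambda>n. f (x (Suc n))) \<longlonglongrightarrow> y"
    proof (rule metric_LIMSEQ_I)
      fix e :: real assume "e > 0"
      then obtain M where M: "(1/2::real)^M < e" using real_arch_pow_inv[of e "1/2"] by auto
      show "\<exists>no. \<forall>n\<ge>no. dist (f (x (Suc n))) y < e"
      proof (intro exI allI impI)
        fix n assume "M \<le> n"
        have "dist (f (x (Suc n))) y < (1/2)^Suc n" using x unfolding Q_def by blast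
        also have "(1/2::real)^Suc n \<le> (1/2)^M" using \<open>M \<le> n\<close> by (intro power_decreasing) auto
        finally show "dist (f (x (Suc n))) y < e" using M by simp
      qed
    qed
    ultimately have "f l = y" using LIMSEQ_Suc LIMSEQ_unique by blast
    moreover have "l \<in> closure (\<Union>n. Sl f D n)"
      using l x unfolding P_def by (intro closure_sequential[THEN iffD2] exI[of _ x]) auto
    ultimately show ?thesis by blast
  qed
  then show ?thesis by blast
qed

theorem theorem1p1:
  fixes f :: "'a::complete_space \<Rightarrow> 'b::metric_space"
  assumes "continuous_on UNIV f"
    and "\<forall>U. open U \<longrightarrow> open (f ` U)"
    and "surj f"
  shows "\<exists>Z. (dens Z, dens (UNIV :: 'b set)) \<in> ordIso \<and> f ` Z = UNIV"
proof -
  obtain D0 where D0: "dense_subset D0 (UNIV::'b set)" "dens (UNIV::'b set) = card_of D0"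
    "\<forall>E. dense_subset E (UNIV::'b set) \<longrightarrow> card_of D0 \<le>o card_of E"
    using dens_spec by blast
  have dense: "UNIV \<subseteq> closure D0" using D0 unfolding dense_subset_def by blast
  have "\<exists>S. card_of S \<le>o card_of D0 \<and> f ` closure S = UNIV"
  proof (cases "finite D0")
    case True
    then have "closure D0 = D0" by (simp add: finite_imp_closed)
    then have "D0 = UNIV" using dense by auto
    define S where "S = range (inv f)"
    have "finite S" using True \<open>D0 = UNIV\<close> S_def by simp
    then have "closure S = S" by (simp add: finite_imp_closed)
    moreover have "f ` S = UNIV" using assms(3) S_def by (simp add: image_image surj_f_inv_f)
    moreover have "card_of S \<le>o card_of D0" using S_def \<open>D0 = UNIV\<close> card_of_image by blast
    ultimately show ?thesis by (intro exI[of _ S]) simp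
  next
    case False
    have "card_of (\<Union>n. Sl f D0 n) \<le>o card_of D0"
      by (rule card_of_UNION_ordLeq_infinite[OF False infinite_iff_card_of_nat[THEN iffD1, OF False]])
        (use Sl_card[OF False] in blast)
    then show ?thesis using lift[OF assms dense] by blast
  qed
  then obtain S where S: "card_of S \<le>o card_of D0" "f ` closure S = UNIV" by blast
  define Z where "Z = closure S"
  obtain E where E: "dense_subset E Z" "dens Z = card_of E"
    "\<forall>E'. dense_subset E' Z \<longrightarrow> card_of E \<le>o card_of E'"
    using dens_spec by blast
  have "dense_subset S Z" unfolding Z_def dense_subset_def by (simp add: closure_subset)
  then have "card_of E \<le>o card_of S" using E(3) by blast
  then have "card_of E \<le>o card_of D0" using S(1) by (rule ordLeq_transitive)
  then have le1: "dens Z \<le>o dens (UNIV::'b set)"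
    using E(2) D0(2) by simp
  have "f ` closure E \<subseteq> closure (f ` E)"
    by (rule image_closure_subset) (auto intro: continuous_on_subset[OF assms(1)] closure_subset[THEN subsetD])
  moreover have "Z \<subseteq> closure E" using E unfolding dense_subset_def by blast
  ultimately have "UNIV \<subseteq> closure (f ` E)" using S Z_def by blast
  then have "dense_subset (f ` E) (UNIV::'b set)" unfolding dense_subset_def by blast
  then have "card_of D0 \<le>o card_of (f ` E)" using D0 by blast
  then have "card_of D0 \<le>o card_of E" using card_of_image by (rule ordLeq_transitive)
  then have le2: "dens (UNIV::'b set) \<le>o dens Z"
    using D0(2) E(2) by simp
  have "(dens Z, dens (UNIV :: 'b set)) \<in> ordIso"
    using le1 le2 ordIso_iff_ordLeq by blast
  then show ?thesis using S Z_def by (intro exI[of _ Z]) simp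
qed

end
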